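(* For all integers $r\ge 3$ and $t$ with $1\le t\le r-2$, there exists an integer $n(r,t)$ such that for every $n\ge n(r,t)$, $$\iota_0(t,n;r)=\max\left\{n^{r-t}-(n-1)^{r-t}+t(n-1),\ (t+2)n^{r-t-1}-(t+1)n^{r-t-2}\right\}.$$
   Context: Let $X_\ell=[n_\ell]$ for $1\le\ell\le r$. For $A,B\in X_1\times\dots\times X_r$, write $A\cap B=\{\ell\in[r]:A[\ell]=B[\ell]\}$, where $A[\ell]$ is the $\ell$-th coordinate. A family $\mathcal F\subseteq X_1\times\dots\times X_r$ is $t$-intersecting if $|A\cap B|\ge t$ for all $A,B\in\mathcal F$. Let $\bigcap\mathcal F=\{\ell\in[r]:\text{all members of }\mathcal F\text{ have the same }\ell\text{-th coordinate}\}$. A $t$-intersecting family is non-trivial if $|\bigcap\mathcal F|<t$. For integers $r>t\ge1$ and $n_1\ge\dots\ge n_r\ge 2$, $\iota_0(t,n_1,\dots,n_r)$ denotes the maximum size of a non-trivial $t$-intersecting family $\mathcal F\subseteq X_1\times\dots\times X_r$, and $\iota_0(t,n;r)=\iota_0(t,n,\dots,n)$ with $r$ entries equal to $n$. *)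

theory Defs
  imports "HOL-Library.FuncSet"
begin

text \<open>Elements of X_1 x ... x X_r are modelled as extensional functions on the
coordinate set {0..<r} (coordinate l+1 of the paper is index l here), with
the l-th coordinate in {0..<ns l} (a copy of [n_l]).\<close>

definition grid :: "nat \<Rightarrow> (nat \<Rightarrow> nat) \<Rightarrow> (nat \<Rightarrow> nat) set" where
  "grid r ns = PiE {..<r} (\<lambda>l. {..<ns l})"

definition agree :: "nat \<Rightarrow> (nat \<Rightarrow> nat) \<Rightarrow> (nat \<Rightarrow> nat) \<Rightarrow> nat set" where
  "agree r A B = {l \<in> {..<r}. A l = B l}"

definition t_intersecting :: "nat \<Rightarrow> nat \<Rightarrow> (nat \<Rightarrow> nat) set \<Rightarrow> bool" where
  "t_intersecting r t F \<longleftrightarrow> (\<forall>A\<in>F. \<forall>B\<in>F. card (agree r A B) \<ge> t)"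

definition common_coords :: "nat \<Rightarrow> (nat \<Rightarrow> nat) set \<Rightarrow> nat set" where
  "common_coords r F = {l \<in> {..<r}. \<forall>A\<in>F. \<forall>B\<in>F. A l = B l}"

definition nontrivial_t_intersecting ::
  "nat \<Rightarrow> (nat \<Rightarrow> nat) \<Rightarrow> nat \<Rightarrow> (nat \<Rightarrow> nat) set \<Rightarrow> bool" where
  "nontrivial_t_intersecting r ns t F \<longleftrightarrow>
     F \<subseteq> grid r ns \<and> t_intersecting r t F \<and> card (common_coords r F) < t"

definition iota0 :: "nat \<Rightarrow> nat \<Rightarrow> (nat \<Rightarrow> nat) \<Rightarrow> nat" where
  "iota0 r t ns = Max (card ` {F. nontrivial_t_intersecting r ns t F})"

definition iota0_uniform :: "nat \<Rightarrow> nat \<Rightarrow> nat \<Rightarrow> nat" where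
  "iota0_uniform t n r = iota0 r t (\<lambda>_. n)"

end

theory Submission
  imports Defs
begin


definition gr :: "nat \<Rightarrow> (nat \<Rightarrow> nat) \<Rightarrow> (nat \<times> nat) set" where
  "gr r A = (\<lambda>l. (l, A l)) ` {..<r}"

lemma gr_mem[simp]: "(l, v) \<in> gr r A \<longleftrightarrow> l < r \<and> v = A l"
  unfolding gr_def by auto

lemma finite_gr[simp]: "finite (gr r A)"
  unfolding gr_def by simp

lemma inj_fst_gr: "inj_on fst (gr r A)"
  unfolding gr_def by (auto simp: inj_on_def)

lemma gr_Int: "gr r A \<inter> gr r B = (\<lambda>l. (l, A l)) ` agree r A B"
  unfolding gr_def agree_def by auto

lemma card_agree: "card (agree r A B) = card (gr r A \<inter> gr r B)"
proof -
  have "inj_on (\<lambda>l. (l, A l)) (agree r A B)" by (auto simp: inj_on_def)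
  then show ?thesis by (simp add: gr_Int card_image)
qed

lemma sub_gr:
  assumes "Q \<subseteq> gr r A"
  shows "Q = (\<lambda>l. (l, A l)) ` (fst ` Q)" "fst ` Q \<subseteq> {..<r}" "card (fst ` Q) = card Q"
    "finite Q" "inj_on fst Q"
proof -
  show "Q = (\<lambda>l. (l, A l)) ` (fst ` Q)"
  proof
    show "Q \<subseteq> (\<lambda>l. (l, A l)) ` fst ` Q"
    proof
      fix x assume "x \<in> Q"
      then obtain l v where x: "x = (l,v)" "l < r" "v = A l" using assms by (cases x) auto
      then show "x \<in> (\<lambda>l. (l, A l)) ` fst ` Q" using \<open>x \<in> Q\<close> by force
    qed
    show "(\<lambda>l. (l, A l)) ` fst ` Q \<subseteq> Q"
    proof
      fix y assume "y \<in> (\<lambda>l. (l, A l)) ` fst ` Q"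
      then obtain x where "x \<in> Q" "y = (fst x, A (fst x))" by auto
      moreover then have "x = (fst x, A (fst x))" using assms by (cases x) auto
      ultimately show "y \<in> Q" by simp
    qed
  qed
  show "fst ` Q \<subseteq> {..<r}" using assms by auto
  show "inj_on fst Q" using inj_fst_gr assms by (rule inj_on_subset)
  then show "card (fst ` Q) = card Q" by (simp add: card_image)
  show "finite Q" by (meson assms finite_gr finite_subset)
qed

lemma card_gr_img:
  assumes "D \<subseteq> {..<r}"
  shows "card (gr r A \<inter> (\<lambda>l. (l, c l)) ` D) = card {l\<in>D. A l = c l}"
proof -
  have "gr r A \<inter> (\<lambda>l. (l, c l)) ` D = (\<lambda>l. (l, c l)) ` {l\<in>D. A l = c l}"
    using assms by (auto simp: gr_def)
  moreover have "inj_on (\<lambda>l. (l, c l)) {l\<in>D. A l = c l}" by (auto simp: inj_on_def)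
  ultimately show ?thesis by (simp add: card_image)
qed

lemma gen_count:
  assumes "finite I" "D1 \<subseteq> I" "D2 \<subseteq> I" "D1 \<inter> D2 = {}" "\<forall>l\<in>I. c l < n"
  shows "card {A \<in> PiE I (\<lambda>_. {..<n}). (\<forall>l\<in>D1. A l = c l) \<and> (\<forall>l\<in>D2. A l \<noteq> c l)}
     = (n - 1) ^ card D2 * n ^ card (I - D1 - D2)"
proof -
  define B where "B = (\<lambda>l. if l \<in> D1 then {c l} else if l \<in> D2 then {..<n} - {c l} else {..<n})"
  have eq: "{A \<in> PiE I (\<lambda>_. {..<n}). (\<forall>l\<in>D1. A l = c l) \<and> (\<forall>l\<in>D2. A l \<noteq> c l)} = PiE I B"
  proof (intro equalityI subsetI)
    fix x assume "x \<in> {A \<in> PiE I (\<lambda>_. {..<n}). (\<forall>l\<in>D1. A l = c l) \<and> (\<forall>l\<in>D2. A l \<noteq> c l)}"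
    then show "x \<in> PiE I B" using assms(2,3,4,5) by (auto simp: B_def PiE_iff)
  next
    fix x assume x: "x \<in> PiE I B"
    have "\<forall>l\<in>D1. x l = c l"
    proof
      fix l assume "l \<in> D1"
      then have "x l \<in> B l" using x assms(2) by (auto simp: PiE_iff)
      then show "x l = c l" using \<open>l \<in> D1\<close> by (simp add: B_def)
    qed
    moreover have "\<forall>l\<in>D2. x l \<noteq> c l"
    proof
      fix l assume "l \<in> D2"
      then have "x l \<in> B l" "l \<notin> D1" using x assms(3,4) by (auto simp: PiE_iff)
      then show "x l \<noteq> c l" using \<open>l \<in> D2\<close> by (simp add: B_def)
    qed
    moreover have "\<forall>l\<in>I. x l < n" using x assms(5) by (auto simp: B_def PiE_iff split: if_splits)
    ultimately show "x \<in> {A \<in> PiE I (\<lambda>_. {..<n}). (\<forall>l\<in>D1. A l = c l) \<and> (\<forall>l\<in>D2. A l \<noteq> c l)}"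
      using x by (auto simp: PiE_iff)
  qed
  have cB: "card (B l) = (if l \<in> D1 then 1 else if l \<in> D2 then n - 1 else n)" if "l \<in> I" for l
    using assms(5) that by (auto simp: B_def)
  have "card (PiE I B) = (\<Prod>l\<in>I. card (B l))" using assms(1) by (rule card_PiE)
  also have "\<dots> = (\<Prod>l\<in>I. (if l \<in> D1 then 1 else if l \<in> D2 then n - 1 else n))"
    using cB by (rule prod.cong[OF refl])
  also have "\<dots> = (\<Prod>l\<in>D1 \<union> D2 \<union> (I - D1 - D2). (if l \<in> D1 then 1 else if l \<in> D2 then n - 1 else n))"
    using assms(2,3) by (intro prod.cong) auto
  also have "\<dots> = (n - 1) ^ card D2 * n ^ card (I - D1 - D2)"
  proof -
    define f where "f = (\<lambda>l. (if l \<in> D1 then 1 else if l \<in> D2 then n - 1 else (n::nat)))"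
    have fin: "finite D1" "finite D2" "finite (I - D1 - D2)"
      using assms(1,2,3) finite_subset by auto
    have "prod f (D1 \<union> D2 \<union> (I - D1 - D2)) = prod f (D1 \<union> D2) * prod f (I - D1 - D2)"
      by (rule prod.union_disjoint) (use fin in auto)
    moreover have "prod f (D1 \<union> D2) = prod f D1 * prod f D2"
      by (rule prod.union_disjoint) (use fin assms(4) in auto)
    moreover have "prod f D1 = 1" by (rule prod.neutral) (simp add: f_def)
    moreover have "prod f D2 = (n - 1) ^ card D2"
    proof -
      have "prod f D2 = prod (\<lambda>_. n - 1) D2" using assms(4) by (intro prod.cong) (auto simp: f_def)
      then show ?thesis by simp
    qed
    moreover have "prod f (I - D1 - D2) = n ^ card (I - D1 - D2)"
    proof -
      have "prod f (I - D1 - D2) = prod (\<lambda>_. n) (I - D1 - D2)" by (intro prod.cong) (auto simp: f_def)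
      then show ?thesis by simp
    qed
    ultimately show ?thesis unfolding f_def by simp
  qed
  finally show ?thesis using eq by simp
qed



definition HM :: "nat \<Rightarrow> nat \<Rightarrow> (nat \<Rightarrow> nat) \<Rightarrow> nat set \<Rightarrow> (nat \<Rightarrow> nat) set" where
  "HM r n c T = {A \<in> grid r (\<lambda>_. n). ((\<forall>l\<in>T. A l = c l) \<and> (\<exists>l\<in>{..<r}-T. A l = c l))
      \<or> (\<exists>d\<in>T. (\<forall>l\<in>{..<r}-{d}. A l = c l) \<and> A d \<noteq> c d)}"

definition TR :: "nat \<Rightarrow> nat \<Rightarrow> (nat \<Rightarrow> nat) \<Rightarrow> nat set \<Rightarrow> nat \<Rightarrow> (nat \<Rightarrow> nat) set" where
  "TR r n c D t = {A \<in> grid r (\<lambda>_. n). t + 1 \<le> card {l\<in>D. A l = c l}}"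

lemma grid_cnt:
  assumes "D1 \<subseteq> {..<r}" "D2 \<subseteq> {..<r}" "D1 \<inter> D2 = {}" "c \<in> grid r (\<lambda>_. n)"
  shows "card {A \<in> grid r (\<lambda>_. n). (\<forall>l\<in>D1. A l = c l) \<and> (\<forall>l\<in>D2. A l \<noteq> c l)}
     = (n - 1) ^ card D2 * n ^ card ({..<r} - D1 - D2)"
  unfolding grid_def
  by (rule gen_count) (use assms in \<open>auto simp: grid_def PiE_iff\<close>)

lemma finite_grid[simp]: "finite (grid r (\<lambda>_. n))"
  unfolding grid_def by (simp add: finite_PiE)

lemma card_HM:
  assumes c: "c \<in> grid r (\<lambda>_. n)" and T: "T \<subseteq> {..<r}"
  shows "card (HM r n c T) = n ^ (r - card T) - (n - 1) ^ (r - card T) + card T * (n - 1)"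
proof -
  define X0 where "X0 = {A \<in> grid r (\<lambda>_. n). (\<forall>l\<in>T. A l = c l) \<and> (\<forall>l\<in>{}. A l \<noteq> c l)}"
  define X1 where "X1 = {A \<in> grid r (\<lambda>_. n). (\<forall>l\<in>T. A l = c l) \<and> (\<forall>l\<in>{..<r}-T. A l \<noteq> c l)}"
  define Y where "Y = (\<lambda>d. {A \<in> grid r (\<lambda>_. n). (\<forall>l\<in>{..<r}-{d}. A l = c l) \<and> (\<forall>l\<in>{d}. A l \<noteq> c l)})"
  have fT: "finite T" using T finite_subset by auto
  have cT: "card ({..<r} - T) = r - card T" using T fT by (simp add: card_Diff_subset)
  have cX0: "card X0 = n ^ (r - card T)"
    unfolding X0_def by (subst grid_cnt) (use T c cT in auto)
  have cX1: "card X1 = (n - 1) ^ (r - card T)"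
    unfolding X1_def by (subst grid_cnt) (use T c cT in auto)
  have cY: "card (Y d) = n - 1" if "d \<in> T" for d
  proof -
    have "card (Y d) = (n - 1) ^ card {d} * n ^ card ({..<r} - ({..<r} - {d}) - {d})"
      unfolding Y_def by (rule grid_cnt) (use T c that in auto)
    moreover have "{..<r} - ({..<r} - {d}) - {d} = {}" by auto
    ultimately show ?thesis by simp
  qed
  have eq: "HM r n c T = (X0 - X1) \<union> (\<Union>d\<in>T. Y d)"
    unfolding HM_def X0_def X1_def Y_def by auto
  have sub: "X1 \<subseteq> X0" unfolding X0_def X1_def by auto
  have finX: "finite X0" "finite X1" unfolding X0_def X1_def by auto
  have finY: "\<And>d. finite (Y d)" unfolding Y_def by auto
  have disj: "(X0 - X1) \<inter> (\<Union>d\<in>T. Y d) = {}" unfolding X0_def Y_def by auto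
  have cU: "card (\<Union>d\<in>T. Y d) = (\<Sum>d\<in>T. card (Y d))"
  proof (rule card_UN_disjoint[OF fT])
    show "\<forall>i\<in>T. finite (Y i)" using finY by auto
    show "\<forall>i\<in>T. \<forall>j\<in>T. i \<noteq> j \<longrightarrow> Y i \<inter> Y j = {}"
      using T unfolding Y_def by fastforce
  qed
  also have "\<dots> = (\<Sum>d\<in>T. n - 1)" using cY by simp
  finally have cU': "card (\<Union>d\<in>T. Y d) = card T * (n - 1)" by simp
  have "card (HM r n c T) = card (X0 - X1) + card (\<Union>d\<in>T. Y d)"
    unfolding eq by (rule card_Un_disjoint) (use finX finY fT disj in auto)
  also have "card (X0 - X1) = card X0 - card X1" using sub finX by (simp add: card_Diff_subset)
  finally show ?thesis using cX0 cX1 cU' by simp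
qed

lemma card_TR:
  assumes c: "c \<in> grid r (\<lambda>_. n)" and D: "D \<subseteq> {..<r}" "card D = t + 2"
  shows "card (TR r n c D t) = n ^ (r - (t + 2)) + (t + 2) * ((n - 1) * n ^ (r - (t + 2)))"
proof -
  have fD: "finite D" using D finite_subset by auto
  define Y0 where "Y0 = {A \<in> grid r (\<lambda>_. n). (\<forall>l\<in>D. A l = c l) \<and> (\<forall>l\<in>{}. A l \<noteq> c l)}"
  define Y where "Y = (\<lambda>d. {A \<in> grid r (\<lambda>_. n). (\<forall>l\<in>D-{d}. A l = c l) \<and> (\<forall>l\<in>{d}. A l \<noteq> c l)})"
  have cD: "card ({..<r} - D) = r - (t + 2)" using D fD by (simp add: card_Diff_subset)
  have cY0: "card Y0 = n ^ (r - (t + 2))"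
    unfolding Y0_def by (subst grid_cnt) (use D c cD in auto)
  have cY: "card (Y d) = (n - 1) * n ^ (r - (t + 2))" if "d \<in> D" for d
  proof -
    have "card (Y d) = (n - 1) ^ card {d} * n ^ card ({..<r} - (D - {d}) - {d})"
      unfolding Y_def by (rule grid_cnt) (use D c that in auto)
    moreover have "{..<r} - (D - {d}) - {d} = {..<r} - D" using that by auto
    ultimately show ?thesis using cD by simp
  qed
  have eq: "TR r n c D t = Y0 \<union> (\<Union>d\<in>D. Y d)"
  proof (intro equalityI subsetI)
    fix A assume A: "A \<in> TR r n c D t"
    let ?E = "{l\<in>D. A l = c l}"
    have Ag: "A \<in> grid r (\<lambda>_. n)" and ce: "t + 1 \<le> card ?E" using A by (auto simp: TR_def)
    show "A \<in> Y0 \<union> (\<Union>d\<in>D. Y d)"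
    proof (cases "?E = D")
      case True
      then have "\<forall>l\<in>D. A l = c l" by blast
      then show ?thesis using Ag by (auto simp: Y0_def)
    next
      case False
      have "card (D - ?E) = card D - card ?E" using fD by (intro card_Diff_subset) auto
      then have "card (D - ?E) \<le> 1" using ce D by simp
      moreover have "D - ?E \<noteq> {}" using False by blast
      ultimately have "card (D - ?E) = 1" using fD
        by (metis (no_types, lifting) card_0_eq finite_Diff le_neq_implies_less less_one)
      then obtain d where d: "D - ?E = {d}" by (rule card_1_singletonE)
      then have "d \<in> D" "A d \<noteq> c d" "\<forall>l\<in>D-{d}. A l = c l" by auto
      then show ?thesis using Ag by (auto simp: Y_def)
    qed
  next
    fix A assume A: "A \<in> Y0 \<union> (\<Union>d\<in>D. Y d)"
    show "A \<in> TR r n c D t"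
    proof (cases "A \<in> Y0")
      case True
      then have "{l\<in>D. A l = c l} = D" by (auto simp: Y0_def)
      then show ?thesis using True D by (auto simp: TR_def Y0_def)
    next
      case False
      then obtain d where d: "d \<in> D" "A \<in> Y d" using A by auto
      then have "{l\<in>D. A l = c l} = D - {d}" by (auto simp: Y_def)
      then have "card {l\<in>D. A l = c l} = t + 1" using D d fD by simp
      then show ?thesis using d by (auto simp: TR_def Y_def)
    qed
  qed
  have finY: "\<And>d. finite (Y d)" unfolding Y_def by auto
  have disj: "Y0 \<inter> (\<Union>d\<in>D. Y d) = {}" unfolding Y0_def Y_def by auto
  have "card (\<Union>d\<in>D. Y d) = (\<Sum>d\<in>D. card (Y d))"
  proof (rule card_UN_disjoint[OF fD])
    show "\<forall>i\<in>D. finite (Y i)" using finY by auto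
    show "\<forall>i\<in>D. \<forall>j\<in>D. i \<noteq> j \<longrightarrow> Y i \<inter> Y j = {}"
      unfolding Y_def by fastforce
  qed
  also have "\<dots> = (\<Sum>d\<in>D. (n - 1) * n ^ (r - (t + 2)))" using cY by simp
  finally have cU: "card (\<Union>d\<in>D. Y d) = (t + 2) * ((n - 1) * n ^ (r - (t + 2)))" using D by simp
  have "card (TR r n c D t) = card Y0 + card (\<Union>d\<in>D. Y d)"
    unfolding eq by (rule card_Un_disjoint) (use finY fD disj in \<open>auto simp: Y0_def\<close>)
  then show ?thesis using cY0 cU by simp
qed



locale fam =
  fixes r n t :: nat and F :: "(nat \<Rightarrow> nat) set"
  assumes Fsub: "F \<subseteq> grid r (\<lambda>_. n)" and Fint: "t_intersecting r t F"
begin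

definition FP :: "(nat \<times> nat) set \<Rightarrow> (nat \<Rightarrow> nat) set" where
  "FP Q = {A \<in> F. Q \<subseteq> gr r A}"

definition fat :: "(nat \<times> nat) set \<Rightarrow> bool" where
  "fat Q \<longleftrightarrow> (\<forall>g. \<exists>A\<in>FP Q. gr r A \<inter> gr r g \<subseteq> Q)"

lemma finF: "finite F" using Fsub finite_grid finite_subset by blast

lemma agreeF: "A \<in> F \<Longrightarrow> B \<in> F \<Longrightarrow> t \<le> card (gr r A \<inter> gr r B)"
  using Fint by (auto simp: t_intersecting_def card_agree)

lemma fat_ne: "fat Q \<Longrightarrow> \<exists>A\<in>F. Q \<subseteq> gr r A"
  unfolding fat_def FP_def by blast

lemma fat_meet: assumes "fat Q" "A \<in> F" shows "t \<le> card (gr r A \<inter> Q)"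
proof -
  obtain B where B: "B \<in> FP Q" "gr r B \<inter> gr r A \<subseteq> Q" using assms(1) unfolding fat_def by blast
  then have "gr r A \<inter> gr r B = gr r A \<inter> Q" unfolding FP_def by auto
  moreover have "B \<in> F" using B(1) unfolding FP_def by auto
  ultimately show ?thesis using agreeF[OF assms(2)] by metis
qed

lemma fat_fat: assumes "fat P" "fat Q" shows "t \<le> card (P \<inter> Q)"
proof -
  obtain A' where A': "A' \<in> F" "P \<subseteq> gr r A'" using fat_ne[OF assms(1)] by blast
  obtain A where A: "A \<in> FP Q" "gr r A \<inter> gr r A' \<subseteq> Q" using assms(2) unfolding fat_def by blast
  have "t \<le> card (gr r A \<inter> P)" using fat_meet[OF assms(1)] A(1) unfolding FP_def by auto
  moreover have "gr r A \<inter> P \<subseteq> P \<inter> Q" using A A' by auto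
  moreover have "finite (P \<inter> Q)" using sub_gr(4)[OF A'(2)] by auto
  ultimately show ?thesis by (meson card_mono le_trans)
qed

lemma finite_FP: "finite (FP Q)" unfolding FP_def using finF by auto

lemma FP_le: "card (FP Q) \<le> n ^ (r - card Q)"
proof (cases "FP Q = {}")
  case True then show ?thesis by simp
next
  case False
  then obtain A0 where A0: "A0 \<in> F" "Q \<subseteq> gr r A0" unfolding FP_def by auto
  let ?D = "fst ` Q"
  have D: "?D \<subseteq> {..<r}" "card ?D = card Q" using sub_gr[OF A0(2)] by auto
  have "FP Q \<subseteq> {A \<in> grid r (\<lambda>_. n). (\<forall>l\<in>?D. A l = A0 l) \<and> (\<forall>l\<in>{}. A l \<noteq> A0 l)}"
  proof
    fix A assume "A \<in> FP Q"
    then have "A \<in> F" "Q \<subseteq> gr r A" unfolding FP_def by auto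
    moreover have "\<forall>l\<in>?D. A l = A0 l"
    proof
      fix l assume "l \<in> ?D"
      then obtain v where "(l, v) \<in> Q" by auto
      then show "A l = A0 l" using subsetD[OF \<open>Q \<subseteq> gr r A\<close>] subsetD[OF A0(2)] by force
    qed
    ultimately show "A \<in> {A \<in> grid r (\<lambda>_. n). (\<forall>l\<in>?D. A l = A0 l) \<and> (\<forall>l\<in>{}. A l \<noteq> A0 l)}"
      using Fsub by auto
  qed
  then have "card (FP Q) \<le> card {A \<in> grid r (\<lambda>_. n). (\<forall>l\<in>?D. A l = A0 l) \<and> (\<forall>l\<in>{}. A l \<noteq> A0 l)}"
    by (intro card_mono) auto
  also have "\<dots> = (n - 1) ^ card ({}::nat set) * n ^ card ({..<r} - ?D - {})"
  proof (rule grid_cnt)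
    show "A0 \<in> grid r (\<lambda>_. n)" using A0 Fsub by auto
  qed (use D in auto)
  also have "card ({..<r} - ?D - {}) = r - card Q"
    using D by (simp add: card_Diff_subset finite_subset)
  finally show ?thesis by simp
qed

lemma nonfat_cover:
  assumes "\<not> fat Q"
  shows "\<exists>g. \<forall>A\<in>FP Q. \<exists>l<r. (l, g l) \<notin> Q \<and> A \<in> FP (insert (l, g l) Q)"
proof -
  obtain g where g: "\<forall>A\<in>FP Q. \<not> gr r A \<inter> gr r g \<subseteq> Q" using assms unfolding fat_def by blast
  have "\<exists>l<r. (l, g l) \<notin> Q \<and> A \<in> FP (insert (l, g l) Q)" if "A \<in> FP Q" for A
  proof -
    have "\<not> gr r A \<inter> gr r g \<subseteq> Q" using g that by blast
    then obtain x where x: "x \<in> gr r A" "x \<in> gr r g" "x \<notin> Q" by blast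
    obtain l v where lv: "x = (l, v)" by (cases x)
    then have "l < r" "v = A l" "v = g l" using x by auto
    moreover have "Q \<subseteq> gr r A" "A \<in> F" using that unfolding FP_def by auto
    ultimately have "(l, g l) \<notin> Q" "A \<in> FP (insert (l, g l) Q)"
      using x(3) lv unfolding FP_def by auto
    then show ?thesis using \<open>l < r\<close> by blast
  qed
  then show ?thesis by blast
qed

lemma nonfat_le:
  assumes "\<not> fat Q"
  shows "card (FP Q) \<le> r * n ^ (r - card Q - 1)"
proof (cases "FP Q = {}")
  case True then show ?thesis by simp
next
  case False
  then obtain A0 where A0: "A0 \<in> F" "Q \<subseteq> gr r A0" unfolding FP_def by auto
  have fQ: "finite Q" using sub_gr[OF A0(2)] by auto
  obtain g where g: "\<forall>A\<in>FP Q. \<exists>l<r. (l, g l) \<notin> Q \<and> A \<in> FP (insert (l, g l) Q)"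
    using nonfat_cover[OF assms] by blast
  let ?L = "{l. l < r \<and> (l, g l) \<notin> Q}"
  have "FP Q \<subseteq> (\<Union>l\<in>?L. FP (insert (l, g l) Q))" using g by blast
  then have "card (FP Q) \<le> card (\<Union>l\<in>?L. FP (insert (l, g l) Q))"
    by (intro card_mono) (auto simp: finite_FP)
  also have "\<dots> \<le> (\<Sum>l\<in>?L. card (FP (insert (l, g l) Q)))" by (rule card_UN_le) auto
  also have "\<dots> \<le> of_nat (card ?L) * n ^ (r - card Q - 1)"
  proof (rule sum_bounded_above)
    fix l assume "l \<in> ?L"
    then have "card (insert (l, g l) Q) = card Q + 1" using fQ by simp
    then show "card (FP (insert (l, g l) Q)) \<le> n ^ (r - card Q - 1)"
      using FP_le[of "insert (l, g l) Q"] by simp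
  qed
  also have "\<dots> \<le> r * n ^ (r - card Q - 1)"
  proof -
    have "card ?L \<le> card {..<r}" by (intro card_mono) auto
    then show ?thesis by simp
  qed
  finally show ?thesis .
qed

lemma triv:
  assumes "Q \<subseteq> gr r A0" "\<forall>A\<in>F. Q \<subseteq> gr r A"
  shows "card Q \<le> card (common_coords r F)"
proof -
  have "fst ` Q \<subseteq> common_coords r F"
  proof
    fix l assume "l \<in> fst ` Q"
    then obtain v where lv: "(l, v) \<in> Q" by auto
    then have "l < r" using assms(1) by auto
    moreover have "\<forall>A\<in>F. A l = v" using lv assms(2) by fastforce
    moreover then have "\<forall>A\<in>F. \<forall>B\<in>F. A l = B l" by metis
    ultimately show "l \<in> common_coords r F" unfolding common_coords_def by blast
  qed
  moreover have "finite (common_coords r F)" unfolding common_coords_def by auto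
  ultimately show ?thesis using sub_gr(3)[OF assms(1)] by (metis card_mono)
qed

lemma fat_triv:
  assumes "fat S" "card S = t"
  shows "t \<le> card (common_coords r F)"
proof -
  obtain A0 where A0: "A0 \<in> F" "S \<subseteq> gr r A0" using fat_ne[OF assms(1)] by blast
  have fS: "finite S" using sub_gr(4)[OF A0(2)] .
  have "\<forall>A\<in>F. S \<subseteq> gr r A"
  proof
    fix A assume "A \<in> F"
    then have "t \<le> card (gr r A \<inter> S)" by (rule fat_meet[OF assms(1)])
    then have "gr r A \<inter> S = S" using fS assms(2)
      by (metis Int_lower2 card_seteq)
    then show "S \<subseteq> gr r A" by blast
  qed
  then show ?thesis using triv[OF A0(2)] assms(2) by simp
qed

definition QQ :: "(nat \<times> nat) set set" where
  "QQ = {Q. card Q = t + 1 \<and> fat Q}"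

lemma finite_QQ: "finite QQ"
proof -
  have "QQ \<subseteq> Pow ({..<r} \<times> {..<n})"
  proof
    fix Q assume "Q \<in> QQ"
    then obtain A where A: "A \<in> F" "Q \<subseteq> gr r A" using fat_ne unfolding QQ_def by blast
    then have "A \<in> grid r (\<lambda>_. n)" using Fsub by auto
    then have "gr r A \<subseteq> {..<r} \<times> {..<n}" unfolding gr_def grid_def by auto
    then show "Q \<in> Pow ({..<r} \<times> {..<n})" using A by auto
  qed
  then show ?thesis by (rule finite_subset) auto
qed

end



lemma pf_extend:
  assumes "inj_on fst U" "U \<subseteq> {..<r} \<times> {..<n}" "0 < n"
  shows "\<exists>c \<in> grid r (\<lambda>_. n). \<forall>x\<in>U. snd x = c (fst x)"
proof -
  define c where "c = (\<lambda>l. if l < r then (if l \<in> fst ` U then snd (THE x. x \<in> U \<and> fst x = l) else 0) else undefined)"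
  have th: "(THE x. x \<in> U \<and> fst x = fst y) = y" if "y \<in> U" for y
    by (rule the_equality) (use that assms(1) in \<open>auto simp: inj_on_def\<close>)
  have "\<forall>x\<in>U. snd x = c (fst x)"
  proof
    fix x assume x: "x \<in> U"
    then have "fst x < r" using assms(2) by auto
    then show "snd x = c (fst x)" using x th[OF x] by (auto simp: c_def)
  qed
  moreover have "c \<in> grid r (\<lambda>_. n)"
  proof -
    have "\<forall>l\<in>{..<r}. c l \<in> {..<n}"
    proof
      fix l assume l: "l \<in> {..<r}"
      show "c l \<in> {..<n}"
      proof (cases "l \<in> fst ` U")
        case True
        then obtain y where y: "y \<in> U" "fst y = l" by auto
        then have "c l = snd y" using l th[OF y(1)] by (auto simp: c_def)
        then show ?thesis using y assms(2) by auto
      next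
        case False then show ?thesis using l assms(3) by (auto simp: c_def)
      qed
    qed
    moreover have "c \<in> extensional {..<r}" by (auto simp: extensional_def c_def)
    ultimately show ?thesis by (simp add: grid_def PiE_iff)
  qed
  ultimately show ?thesis by blast
qed

lemma gr_grid: "A \<in> grid r (\<lambda>_. n) \<Longrightarrow> gr r A \<subseteq> {..<r} \<times> {..<n}"
  unfolding gr_def grid_def by auto

locale fam2 = fam +
  assumes nontriv: "card (common_coords r F) < t"
    and t1: "1 \<le> t" and tr: "t + 2 \<le> r" and n2: "2 \<le> n"
begin

lemma QQ_D: assumes "Q \<in> QQ" shows "card Q = t + 1" "fat Q" "\<exists>A\<in>F. Q \<subseteq> gr r A" "finite Q"
proof -
  show "card Q = t + 1" "fat Q" using assms unfolding QQ_def by auto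
  then show "\<exists>A\<in>F. Q \<subseteq> gr r A" using fat_ne by blast
  then show "finite Q" using sub_gr(4) by blast
qed

lemma meet_card:
  assumes "Q1 \<in> QQ" "Q2 \<in> QQ" "Q1 \<noteq> Q2"
  shows "card (Q1 \<inter> Q2) = t"
proof -
  have "t \<le> card (Q1 \<inter> Q2)" using fat_fat QQ_D assms by blast
  moreover have "Q1 \<inter> Q2 \<noteq> Q1"
  proof
    assume "Q1 \<inter> Q2 = Q1"
    then have "Q1 \<subseteq> Q2" by blast
    then show False using card_subset_eq QQ_D assms by metis
  qed
  then have "card (Q1 \<inter> Q2) < card Q1" using QQ_D(4)[OF assms(1)]
    by (meson Int_lower1 psubsetI psubset_card_mono)
  ultimately show ?thesis using QQ_D(1)[OF assms(1)] by simp
qed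

lemma one_more:
  assumes "Q \<in> QQ" "S \<subseteq> Q" "card S = t"
  obtains z where "Q = insert z S" "z \<notin> S"
proof -
  have "card (Q - S) = 1" using assms QQ_D[OF assms(1)] by (simp add: card_Diff_subset finite_subset)
  then obtain z where z: "Q - S = {z}" by (rule card_1_singletonE)
  then have "Q = insert z S" "z \<notin> S" using assms(2) by auto
  then show ?thesis using that by blast
qed

lemma crude:
  "card F \<le> card QQ * n ^ (r - t - 1) + 2 ^ r * r * (r * n ^ (r - t - 2))"
proof (cases "F = {}")
  case True then show ?thesis by simp
next
  case False
  then obtain B0 where B0: "B0 \<in> F" by auto
  define Ts where "Ts = {T. T \<subseteq> {..<r} \<and> card T = t}"
  define S where "S = (\<lambda>T. (\<lambda>l. (l, B0 l)) ` T)"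
  have finTs: "finite Ts" unfolding Ts_def by auto
  have cTs: "card Ts \<le> 2 ^ r"
  proof -
    have "Ts \<subseteq> Pow {..<r}" unfolding Ts_def by auto
    then have "card Ts \<le> card (Pow {..<r})" by (intro card_mono) auto
    then show ?thesis by (simp add: card_Pow)
  qed
  have cS: "card (S T) = t" "finite (S T)" if "T \<in> Ts" for T
  proof -
    have "inj_on (\<lambda>l. (l, B0 l)) T" by (auto simp: inj_on_def)
    then show "card (S T) = t" using that unfolding S_def Ts_def by (simp add: card_image)
    show "finite (S T)" using that unfolding S_def Ts_def by (auto intro: finite_subset)
  qed
  have nf: "\<not> fat (S T)" if "T \<in> Ts" for T
    using fat_triv cS[OF that] nontriv by fastforce
  have "\<forall>T\<in>Ts. \<exists>g. \<forall>A\<in>FP (S T). \<exists>l<r. (l, g l) \<notin> S T \<and> A \<in> FP (insert (l, g l) (S T))"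
    using nonfat_cover nf by blast
  then obtain G where G: "\<forall>T\<in>Ts. \<forall>A\<in>FP (S T). \<exists>l<r. (l, G T l) \<notin> S T \<and> A \<in> FP (insert (l, G T l) (S T))"
    by (metis bchoice)
  define Qf where "Qf = (\<lambda>(T, l). insert (l, G T l) (S T))"
  define I where "I = {(T, l). T \<in> Ts \<and> l < r \<and> (l, G T l) \<notin> S T \<and> \<not> fat (insert (l, G T l) (S T))}"
  have I_sub: "I \<subseteq> Ts \<times> {..<r}" unfolding I_def by auto
  have finI: "finite I" using I_sub finTs by (meson finite_SigmaI finite_lessThan finite_subset)
  have cI: "card I \<le> 2 ^ r * r"
  proof -
    have "card I \<le> card (Ts \<times> {..<r})" using I_sub finTs by (intro card_mono) auto
    also have "\<dots> = card Ts * r" by (simp add: card_cartesian_product)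
    finally show ?thesis using cTs by (meson le_trans mult_le_mono1)
  qed
  have cover: "F \<subseteq> (\<Union>Q\<in>QQ. FP Q) \<union> (\<Union>i\<in>I. FP (Qf i))"
  proof
    fix A assume A: "A \<in> F"
    have "t \<le> card (agree r A B0)" using Fint A B0 unfolding t_intersecting_def by auto
    then obtain T where T: "T \<subseteq> agree r A B0" "card T = t" by (meson obtain_subset_with_card_n)
    then have TTs: "T \<in> Ts" unfolding Ts_def agree_def by auto
    have "S T \<subseteq> gr r A" using T unfolding S_def agree_def by auto
    then have "A \<in> FP (S T)" using A unfolding FP_def by auto
    then obtain l where l: "l < r" "(l, G T l) \<notin> S T" "A \<in> FP (insert (l, G T l) (S T))"
      using G TTs by blast
    show "A \<in> (\<Union>Q\<in>QQ. FP Q) \<union> (\<Union>i\<in>I. FP (Qf i))"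
    proof (cases "fat (insert (l, G T l) (S T))")
      case True
      have "card (insert (l, G T l) (S T)) = t + 1" using cS[OF TTs] l by simp
      then have "insert (l, G T l) (S T) \<in> QQ" using True unfolding QQ_def by auto
      then show ?thesis using l by blast
    next
      case False
      then have "(T, l) \<in> I" using TTs l unfolding I_def by auto
      then show ?thesis using l unfolding Qf_def by force
    qed
  qed
  have "card F \<le> card ((\<Union>Q\<in>QQ. FP Q) \<union> (\<Union>i\<in>I. FP (Qf i)))"
    using cover by (intro card_mono) (auto simp: finite_QQ finI finite_FP)
  also have "\<dots> \<le> card (\<Union>Q\<in>QQ. FP Q) + card (\<Union>i\<in>I. FP (Qf i))" by (rule card_Un_le)
  also have "card (\<Union>Q\<in>QQ. FP Q) \<le> card QQ * n ^ (r - t - 1)"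
  proof -
    have "card (\<Union>Q\<in>QQ. FP Q) \<le> (\<Sum>Q\<in>QQ. card (FP Q))" by (rule card_UN_le[OF finite_QQ])
    also have "\<dots> \<le> of_nat (card QQ) * n ^ (r - t - 1)"
    proof (rule sum_bounded_above)
      fix Q assume "Q \<in> QQ"
      then show "card (FP Q) \<le> n ^ (r - t - 1)" using FP_le[of Q] QQ_D by simp
    qed
    finally show ?thesis by simp
  qed
  also have "card (\<Union>i\<in>I. FP (Qf i)) \<le> 2 ^ r * r * (r * n ^ (r - t - 2))"
  proof -
    have "card (\<Union>i\<in>I. FP (Qf i)) \<le> (\<Sum>i\<in>I. card (FP (Qf i)))" by (rule card_UN_le[OF finI])
    also have "\<dots> \<le> of_nat (card I) * (r * n ^ (r - t - 2))"
    proof (rule sum_bounded_above)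
      fix i assume "i \<in> I"
      then obtain T l where i: "i = (T, l)" "T \<in> Ts" "(l, G T l) \<notin> S T" "\<not> fat (insert (l, G T l) (S T))"
        unfolding I_def by auto
      have "card (Qf i) = t + 1" using i cS[OF i(2)] unfolding Qf_def by simp
      moreover have "\<not> fat (Qf i)" using i unfolding Qf_def by simp
      ultimately show "card (FP (Qf i)) \<le> r * n ^ (r - t - 2)" using nonfat_le[of "Qf i"] by simp
    qed
    also have "\<dots> \<le> 2 ^ r * r * (r * n ^ (r - t - 2))" using cI by simp
    finally show ?thesis .
  qed
  finally show ?thesis by simp
qed

end



context fam2
begin

lemma caseA:
  assumes Q: "Q1 \<in> QQ" "Q2 \<in> QQ" "Q3 \<in> QQ" "Q1 \<noteq> Q2" "\<not> Q1 \<inter> Q2 \<subseteq> Q3"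
  shows "card F \<le> n ^ (r - (t + 2)) + (t + 2) * ((n - 1) * n ^ (r - (t + 2)))"
proof -
  define S where "S = Q1 \<inter> Q2"
  have cS: "card S = t" unfolding S_def using meet_card Q by blast
  obtain p1 where p1: "Q1 = insert p1 S" "p1 \<notin> S" using one_more[OF Q(1) _ cS] S_def by blast
  obtain p2 where p2: "Q2 = insert p2 S" "p2 \<notin> S" using one_more[OF Q(2) _ cS] S_def by blast
  have p12: "p1 \<noteq> p2" using p1 p2 Q(4) by auto
  obtain s where s: "s \<in> S" "s \<notin> Q3" using Q(5) S_def by auto
  have fS: "finite S" using QQ_D(4)[OF Q(1)] S_def by auto
  have sub3: "Qi - {s} \<subseteq> Q3" if "Qi \<in> QQ" "s \<in> Qi" "Qi \<noteq> Q3" for Qi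
  proof -
    have "t \<le> card (Qi \<inter> Q3)" using fat_fat QQ_D that(1) Q(3) by blast
    moreover have "Qi \<inter> Q3 \<subseteq> Qi - {s}" using s by auto
    moreover have "card (Qi - {s}) = t" using QQ_D[OF that(1)] that(2) by simp
    moreover have "finite (Qi - {s})" using QQ_D[OF that(1)] by simp
    ultimately have "Qi \<inter> Q3 = Qi - {s}" by (metis card_seteq)
    then show ?thesis by blast
  qed
  have s1: "Q1 - {s} \<subseteq> Q3" using sub3[OF Q(1)] s p1 by blast
  have s2: "Q2 - {s} \<subseteq> Q3" using sub3[OF Q(2)] s p2 by blast
  define U where "U = insert p1 (insert p2 S)"
  have cU: "card U = t + 2" unfolding U_def using p1 p2 p12 fS cS by simp
  have fU: "finite U" unfolding U_def using fS by simp
  have Q3eq: "Q3 = U - {s}"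
  proof -
    have "U - {s} \<subseteq> Q3" using s1 s2 p1 p2 unfolding U_def by blast
    moreover have "card (U - {s}) = t + 1" using cU s fU unfolding U_def by simp
    ultimately have "U - {s} = Q3" using QQ_D[OF Q(3)] by (intro card_seteq) auto
    then show ?thesis by simp
  qed
  have Q1eq: "Q1 = U - {p2}" using p1 p2 p12 unfolding U_def by auto
  have Q2eq: "Q2 = U - {p1}" using p1 p2 p12 unfolding U_def by auto
  have sp: "s \<noteq> p1" "s \<noteq> p2" using s p1 p2 by auto
  have big: "t + 1 \<le> card (gr r A \<inter> U)" if A: "A \<in> F" for A
  proof (rule ccontr)
    assume "\<not> t + 1 \<le> card (gr r A \<inter> U)"
    then have le: "card (gr r A \<inter> U) \<le> t" by simp
    define X where "X = gr r A \<inter> U"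
    have fX: "finite X" unfolding X_def using fU by simp
    have m: "t \<le> card (X - {p})" if "p \<in> {p1, p2, s}" for p
    proof -
      have "fat (U - {p})" using that Q1eq Q2eq Q3eq QQ_D Q by auto
      then have "t \<le> card (gr r A \<inter> (U - {p}))" using fat_meet A by blast
      moreover have "gr r A \<inter> (U - {p}) = X - {p}" unfolding X_def by auto
      ultimately show ?thesis by simp
    qed
    have nx: "p \<notin> X" if "p \<in> {p1, p2, s}" for p
    proof
      assume "p \<in> X"
      then have "card (X - {p}) = card X - 1" using fX by simp
      then show False using m[OF that] le t1 unfolding X_def by simp
    qed
    have "X \<subseteq> S - {s}" using nx unfolding X_def U_def by auto
    then have "card X \<le> card (S - {s})" using fS by (intro card_mono) auto
    also have "\<dots> = t - 1" using cS s fS by simp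
    finally have "card X \<le> t - 1" .
    moreover have "card (X - {p1}) \<le> card X" using fX by (simp add: card_mono)
    ultimately show False using m[of p1] t1 by simp
  qed
  obtain A1 where A1: "A1 \<in> F" "Q1 \<subseteq> gr r A1" using QQ_D(3)[OF Q(1)] by blast
  obtain A2 where A2: "A2 \<in> F" "Q2 \<subseteq> gr r A2" using QQ_D(3)[OF Q(2)] by blast
  obtain A3 where A3: "A3 \<in> F" "Q3 \<subseteq> gr r A3" using QQ_D(3)[OF Q(3)] by blast
  have inj: "inj_on fst U"
  proof (rule inj_onI)
    fix x y assume xy: "x \<in> U" "y \<in> U" "fst x = fst y"
    have "(x \<in> Q1 \<and> y \<in> Q1) \<or> (x \<in> Q2 \<and> y \<in> Q2) \<or> (x \<in> Q3 \<and> y \<in> Q3)"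
      using xy(1,2) Q1eq Q2eq Q3eq sp p12 by auto
    then show "x = y"
      using xy(3) inj_on_subset[OF inj_fst_gr A1(2)] inj_on_subset[OF inj_fst_gr A2(2)]
        inj_on_subset[OF inj_fst_gr A3(2)] by (meson inj_onD)
  qed
  have Usub: "U \<subseteq> {..<r} \<times> {..<n}"
  proof -
    have "U \<subseteq> Q1 \<union> Q2" using Q1eq Q2eq p12 by auto
    moreover have "Q1 \<subseteq> {..<r} \<times> {..<n}" using A1 Fsub gr_grid by blast
    moreover have "Q2 \<subseteq> {..<r} \<times> {..<n}" using A2 Fsub gr_grid by blast
    ultimately show ?thesis by blast
  qed
  obtain c where c: "c \<in> grid r (\<lambda>_. n)" "\<forall>x\<in>U. snd x = c (fst x)"
    using pf_extend[OF inj Usub] n2 by auto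
  define D where "D = fst ` U"
  have Ueq: "U = (\<lambda>l. (l, c l)) ` D"
  proof
    show "U \<subseteq> (\<lambda>l. (l, c l)) ` D" unfolding D_def using c(2) by (auto intro!: image_eqI)
    show "(\<lambda>l. (l, c l)) ` D \<subseteq> U" unfolding D_def using c(2) by force
  qed
  have D: "D \<subseteq> {..<r}" "card D = t + 2" unfolding D_def using Usub inj cU by (auto simp: card_image)
  have "F \<subseteq> TR r n c D t"
  proof
    fix A assume A: "A \<in> F"
    then have "t + 1 \<le> card {l\<in>D. A l = c l}" using big[OF A] Ueq card_gr_img[OF D(1)] by simp
    then show "A \<in> TR r n c D t" unfolding TR_def using A Fsub by auto
  qed
  then have "card F \<le> card (TR r n c D t)" by (intro card_mono) (auto simp: TR_def)
  also have "\<dots> = n ^ (r - (t + 2)) + (t + 2) * ((n - 1) * n ^ (r - (t + 2)))"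
    by (rule card_TR[OF c(1) D])
  finally show ?thesis .
qed

end



context fam2
begin

lemma caseB:
  assumes c2: "2 \<le> card QQ" and cm: "r - t \<le> card QQ"
    and star: "\<forall>Q1\<in>QQ. \<forall>Q2\<in>QQ. \<forall>Q3\<in>QQ. Q1 \<noteq> Q2 \<longrightarrow> Q1 \<inter> Q2 \<subseteq> Q3"
  shows "card F \<le> n ^ (r - t) - (n - 1) ^ (r - t) + t * (n - 1)"
proof -
  obtain Q1 where Q1: "Q1 \<in> QQ" using c2 by fastforce
  have "card (QQ - {Q1}) \<ge> 1" using c2 Q1 finite_QQ by simp
  then have "QQ - {Q1} \<noteq> {}" by (metis card.empty not_one_le_zero)
  then obtain Q2 where Q2: "Q2 \<in> QQ" "Q2 \<noteq> Q1" by blast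
  define S where "S = Q1 \<inter> Q2"
  have cS: "card S = t" unfolding S_def using meet_card Q1 Q2 by metis
  have SQ: "\<forall>Q\<in>QQ. S \<subseteq> Q" using star Q1 Q2 unfolding S_def by metis
  obtain A1 where A1: "A1 \<in> F" "Q1 \<subseteq> gr r A1" using QQ_D(3)[OF Q1] by blast
  have SA1: "S \<subseteq> gr r A1" using A1 unfolding S_def by auto
  have fS: "finite S" using sub_gr(4)[OF SA1] .
  define T where "T = fst ` S"
  have T: "T \<subseteq> {..<r}" "card T = t" unfolding T_def using sub_gr[OF SA1] cS by auto
  have miss: "(\<forall>Q\<in>QQ. Q - S \<subseteq> gr r A) \<and> card (gr r A \<inter> S) < t \<and> t \<le> card (gr r A \<inter> S) + 1"
    if A: "A \<in> F" "\<not> S \<subseteq> gr r A" for A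
  proof -
    have lt: "card (gr r A \<inter> S) < t"
    proof -
      have "gr r A \<inter> S \<subset> S" using A(2) by blast
      then show ?thesis using cS fS psubset_card_mono by metis
    qed
    have each: "Q - S \<subseteq> gr r A \<and> t \<le> card (gr r A \<inter> S) + 1" if Q: "Q \<in> QQ" for Q
    proof -
      obtain z where z: "Q = insert z S" "z \<notin> S" using one_more[OF Q SQ[rule_format, OF Q] cS] by blast
      have tq: "t \<le> card (gr r A \<inter> Q)" using fat_meet QQ_D(2)[OF Q] A(1) by blast
      have zin: "z \<in> gr r A"
      proof (rule ccontr)
        assume "z \<notin> gr r A"
        then have "gr r A \<inter> Q = gr r A \<inter> S" using z by auto
        then show False using tq lt by simp
      qed
      have "gr r A \<inter> Q = insert z (gr r A \<inter> S)" using z zin by auto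
      then have "card (gr r A \<inter> Q) = card (gr r A \<inter> S) + 1" using z fS by simp
      then show ?thesis using tq zin z by auto
    qed
    show ?thesis using each lt Q1 by blast
  qed
  obtain B where B: "B \<in> F" "\<not> S \<subseteq> gr r B"
  proof (rule ccontr)
    assume "\<not> thesis"
    then have "\<forall>A\<in>F. S \<subseteq> gr r A" using that by blast
    then have "card S \<le> card (common_coords r F)" using triv[OF SA1] by blast
    then show False using cS nontriv by simp
  qed
  define Z where "Z = (\<Union>Q\<in>QQ. Q - S)"
  have ZB: "Z \<subseteq> gr r B" using miss[OF B] unfolding Z_def by blast
  have fZ: "finite Z" using ZB finite_gr by (rule finite_subset)
  have "QQ \<subseteq> (\<lambda>z. insert z S) ` Z"
  proof
    fix Q assume Q: "Q \<in> QQ"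
    obtain z where z: "Q = insert z S" "z \<notin> S" using one_more[OF Q SQ[rule_format, OF Q] cS] by blast
    then have "z \<in> Z" unfolding Z_def using Q by blast
    then show "Q \<in> (\<lambda>z. insert z S) ` Z" using z by blast
  qed
  then have "card QQ \<le> card Z" using fZ by (meson card_image_le card_mono finite_imageI le_trans)
  have disj: "fst z \<notin> T" if zZ: "z \<in> Z" for z
  proof
    assume "fst z \<in> T"
    then obtain x where x: "x \<in> S" "fst x = fst z" unfolding T_def by auto
    obtain Q where Q: "Q \<in> QQ" "z \<in> Q" "z \<notin> S" using zZ unfolding Z_def by blast
    obtain A where A: "A \<in> F" "Q \<subseteq> gr r A" using QQ_D(3)[OF Q(1)] by blast
    have "x \<in> Q" using SQ Q x by blast
    then have "x = z" using inj_on_subset[OF inj_fst_gr A(2)] x Q by (meson inj_onD)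
    then show False using x Q by simp
  qed
  have fstZ: "fst ` Z = {..<r} - T"
  proof -
    have sub: "fst ` Z \<subseteq> {..<r} - T" using disj ZB by auto
    have "card (fst ` Z) = card Z" using inj_on_subset[OF inj_fst_gr ZB] by (simp add: card_image)
    moreover have "card ({..<r} - T) = r - t" using T by (simp add: card_Diff_subset finite_subset)
    ultimately have "card ({..<r} - T) \<le> card (fst ` Z)" using \<open>card QQ \<le> card Z\<close> cm by simp
    then show ?thesis using sub by (intro card_seteq) auto
  qed
  define U where "U = S \<union> Z"
  have injU: "inj_on fst U"
  proof (rule inj_onI)
    fix x y assume xy: "x \<in> U" "y \<in> U" "fst x = fst y"
    show "x = y"
    proof (cases "x \<in> S")
      case True
      show ?thesis
      proof (cases "y \<in> S")
        case True
        then show ?thesis using \<open>x \<in> S\<close> xy(3) inj_on_subset[OF inj_fst_gr SA1] by (meson inj_onD)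
      next
        case False
        then have "y \<in> Z" using xy unfolding U_def by auto
        then have "fst y \<notin> T" by (rule disj)
        moreover have "fst x \<in> T" using \<open>x \<in> S\<close> unfolding T_def by auto
        ultimately show ?thesis using xy(3) by simp
      qed
    next
      case False
      then have "x \<in> Z" using xy unfolding U_def by auto
      show ?thesis
      proof (cases "y \<in> S")
        case True
        have "fst x \<notin> T" using \<open>x \<in> Z\<close> by (rule disj)
        moreover have "fst y \<in> T" using True unfolding T_def by auto
        ultimately show ?thesis using xy(3) by simp
      next
        case False
        then have "y \<in> Z" using xy unfolding U_def by auto
        then show ?thesis using \<open>x \<in> Z\<close> xy(3) inj_on_subset[OF inj_fst_gr ZB] by (meson inj_onD)
      qed
    qed
  qed
  have Usub: "U \<subseteq> {..<r} \<times> {..<n}"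
    using SA1 ZB gr_grid Fsub A1(1) B(1) unfolding U_def by blast
  obtain c where c: "c \<in> grid r (\<lambda>_. n)" "\<forall>x\<in>U. snd x = c (fst x)"
    using pf_extend[OF injU Usub] n2 by auto
  have Seq: "S = (\<lambda>l. (l, c l)) ` T"
  proof
    show "S \<subseteq> (\<lambda>l. (l, c l)) ` T"
    proof
      fix x assume x: "x \<in> S"
      then have "snd x = c (fst x)" using c(2) unfolding U_def by auto
      then have "x = (fst x, c (fst x))" by (metis prod.collapse)
      then show "x \<in> (\<lambda>l. (l, c l)) ` T" unfolding T_def using x by blast
    qed
    show "(\<lambda>l. (l, c l)) ` T \<subseteq> S" unfolding T_def using c(2) unfolding U_def by force
  qed
  have Zc: "B l = c l" if lr: "l < r" "l \<notin> T" for l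
  proof -
    have "l \<in> fst ` Z" using fstZ lr by simp
    then obtain z where z: "z \<in> Z" "fst z = l" by blast
    have "z \<in> gr r B" using ZB z(1) by blast
    then have zz: "z = (l, B l)" using z(2) by (cases z) auto
    have "snd z = c (fst z)" using c(2) z(1) unfolding U_def by blast
    then show ?thesis using zz by simp
  qed
  have ZA: "A l = c l" if hA: "A \<in> F" "\<not> S \<subseteq> gr r A" "l < r" "l \<notin> T" for A l
  proof -
    have "l \<in> fst ` Z" using fstZ hA by simp
    then obtain z where z: "z \<in> Z" "fst z = l" by blast
    have "Z \<subseteq> gr r A" using miss[OF hA(1,2)] unfolding Z_def by blast
    then have "z \<in> gr r A" using z(1) by blast
    then have zz: "z = (l, A l)" using z(2) by (cases z) auto
    have "snd z = c (fst z)" using c(2) z(1) unfolding U_def by blast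
    then show ?thesis using zz by simp
  qed
  have cardS: "card (gr r A \<inter> S) = card {l\<in>T. A l = c l}" for A
    using Seq card_gr_img[OF T(1)] by simp
  have "F \<subseteq> HM r n c T"
  proof
    fix A assume A: "A \<in> F"
    have Ag: "A \<in> grid r (\<lambda>_. n)" using A Fsub by auto
    show "A \<in> HM r n c T"
    proof (cases "S \<subseteq> gr r A")
      case True
      then have onT: "\<forall>l\<in>T. A l = c l" using Seq by auto
      have "\<exists>l\<in>{..<r}-T. A l = c l"
      proof (rule ccontr)
        assume no: "\<not> (\<exists>l\<in>{..<r}-T. A l = c l)"
        have "gr r A \<inter> gr r B \<subseteq> gr r B \<inter> S"
        proof
          fix x assume x: "x \<in> gr r A \<inter> gr r B"
          then obtain l where l: "x = (l, A l)" "l < r" "A l = B l" by (cases x) auto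
          show "x \<in> gr r B \<inter> S"
          proof (cases "l \<in> T")
            case True then show ?thesis using l x onT Seq by auto
          next
            case False then show ?thesis using l Zc no by force
          qed
        qed
        then have "card (gr r A \<inter> gr r B) \<le> card (gr r B \<inter> S)" using fS by (intro card_mono) auto
        then show False using miss[OF B] agreeF[OF A B(1)] by simp
      qed
      then show ?thesis unfolding HM_def using Ag onT by auto
    next
      case False
      have offT: "\<forall>l\<in>{..<r}-T. A l = c l" using ZA[OF A False] by auto
      define E where "E = {l\<in>T. A l = c l}"
      have cE: "card E = t - 1"
      proof -
        have "card E < t" "t \<le> card E + 1" using miss[OF A False] cardS[of A] unfolding E_def by auto
        then show ?thesis by linarith
      qed
      have fT: "finite T" using T finite_subset by auto
      have "card (T - E) = 1" using cE T fT t1 by (simp add: card_Diff_subset E_def)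
      then obtain d where d: "T - E = {d}" by (rule card_1_singletonE)
      then have "d \<in> T" "A d \<noteq> c d" "\<forall>l\<in>T-{d}. A l = c l" unfolding E_def by auto
      then have "\<forall>l\<in>{..<r}-{d}. A l = c l" using offT by auto
      then show ?thesis unfolding HM_def using Ag \<open>d \<in> T\<close> \<open>A d \<noteq> c d\<close> by auto
    qed
  qed
  then have "card F \<le> card (HM r n c T)" by (intro card_mono) (auto simp: HM_def)
  also have "\<dots> = n ^ (r - t) - (n - 1) ^ (r - t) + t * (n - 1)"
    using card_HM[OF c(1) T(1)] T(2) by simp
  finally show ?thesis .
qed

end



lemma bern:
  fixes n :: int
  assumes "1 \<le> n"
  shows "(n - 1) ^ (k + 2) \<le> n ^ (k + 2) - (int k + 2) * n ^ (k + 1) + (int k + 2)^2 * n ^ k"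
proof (induction k)
  case 0
  then show ?case by (simp add: power2_eq_square algebra_simps)
next
  case (Suc k)
  define p where "p = n ^ k"
  have p0: "0 \<le> p" using assms unfolding p_def by simp
  have IH: "(n - 1) ^ (k + 2) \<le> n * n * p - (int k + 2) * n * p + (int k + 2)^2 * p"
    using Suc.IH unfolding p_def by (simp add: power_add power2_eq_square algebra_simps)
  have "(n - 1) ^ (Suc k + 2) = (n - 1) * (n - 1) ^ (k + 2)" by simp
  also have "\<dots> \<le> (n - 1) * (n * n * p - (int k + 2) * n * p + (int k + 2)^2 * p)"
    using IH assms by (intro mult_left_mono) auto
  also have "\<dots> \<le> n * n * n * p - (int k + 3) * n * n * p + (int k + 3)^2 * n * p"
  proof -
    have "n * n * n * p - (int k + 3) * n * n * p + (int k + 3)^2 * n * p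
        - (n - 1) * (n * n * p - (int k + 2) * n * p + (int k + 2)^2 * p)
        = (int k + 3) * (n * p) + (int k + 2)^2 * p"
      by (simp add: power2_eq_square algebra_simps)
    moreover have "0 \<le> (int k + 3) * (n * p) + (int k + 2)^2 * p" using p0 assms by simp
    ultimately show ?thesis by linarith
  qed
  also have "\<dots> = n ^ (Suc k + 2) - (int (Suc k) + 2) * n ^ (Suc k + 1) + (int (Suc k) + 2)^2 * n ^ Suc k"
    unfolding p_def by (simp add: power_add power2_eq_square algebra_simps)
  finally show ?case .
qed

lemma crude_arith:
  fixes n K m :: nat
  assumes m2: "2 \<le> m" and nb: "K + m^2 \<le> n"
  shows "(m - 1) * n ^ (m - 1) + K * n ^ (m - 2) \<le> n ^ m - (n - 1) ^ m"
proof -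
  obtain k where k: "m = k + 2" using m2 by (metis add.commute le_Suc_ex)
  have n1: "1 \<le> n" using nb m2 by (metis add_leD2 le_trans one_le_power m2 order.trans
        Suc_leI zero_less_numeral less_le_trans nat_le_linear nat_power_eq_Suc_0_iff not_less_eq_eq) 
  have n1': "(1::int) \<le> int n" using n1 by simp
  define p where "p = int n ^ k"
  have p0: "0 \<le> p" unfolding p_def by simp
  have b: "(int n - 1) ^ (k + 2) \<le> int n * int n * p - (int k + 2) * int n * p + (int k + 2)^2 * p"
    using bern[OF n1', of k] unfolding p_def by (simp add: power_add power2_eq_square algebra_simps)
  have nb': "int K + (int k + 2)^2 \<le> int n"
  proof -
    have h: "K + (k + 2)^2 \<le> n" using nb k by simp
    have "int K + int ((k + 2)^2) \<le> int n" using h by (metis of_nat_add of_nat_le_iff)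
    moreover have "int ((k + 2)^2) = (int k + 2)^2" by simp
    ultimately show ?thesis by (simp add: add.commute)
  qed
  have "(int k + 1) * (int n * p) + int K * p \<le> (int k + 2) * int n * p - (int k + 2)^2 * p"
  proof -
    have "(int k + 2) * int n * p - (int k + 2)^2 * p - ((int k + 1) * (int n * p) + int K * p)
        = (int n - int K - (int k + 2)^2) * p" by (simp add: algebra_simps power2_eq_square)
    moreover have "0 \<le> (int n - int K - (int k + 2)^2) * p" using nb' p0 by simp
    ultimately show ?thesis by linarith
  qed
  also have "\<dots> \<le> int n * int n * p - (int n - 1) ^ (k + 2)" using b by linarith
  finally have I: "(int k + 1) * (int n * p) + int K * p \<le> int n * int n * p - (int n - 1) ^ (k + 2)" .
  have le: "(n - 1) ^ m \<le> n ^ m" by (simp add: power_mono)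
  have "int ((m - 1) * n ^ (m - 1) + K * n ^ (m - 2)) = (int k + 1) * (int n * p) + int K * p"
    unfolding p_def k by (simp add: algebra_simps)
  moreover have "int (n ^ m - (n - 1) ^ m) = int n * int n * p - (int n - 1) ^ (k + 2)"
  proof -
    have "int (n ^ m - (n - 1) ^ m) = int (n ^ m) - int ((n - 1) ^ m)" using le by (rule of_nat_diff)
    moreover have "int ((n - 1) ^ m) = (int n - 1) ^ (k + 2)" using n1 k by (simp add: of_nat_diff)
    moreover have "int (n ^ m) = int n * int n * p" unfolding p_def k by (simp add: power_add power2_eq_square)
    ultimately show ?thesis by simp
  qed
  ultimately show ?thesis using I by linarith
qed

context fam2
begin

lemma upper:
  assumes N: "2 ^ r * r * r + (r - t)^2 \<le> n"
  shows "card F \<le> max (n ^ (r - t) - (n - 1) ^ (r - t) + t * (n - 1))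
                       (n ^ (r - (t + 2)) + (t + 2) * ((n - 1) * n ^ (r - (t + 2))))"
proof (cases "\<exists>Q1\<in>QQ. \<exists>Q2\<in>QQ. \<exists>Q3\<in>QQ. Q1 \<noteq> Q2 \<and> \<not> Q1 \<inter> Q2 \<subseteq> Q3")
  case True
  then obtain Q1 Q2 Q3 where "Q1 \<in> QQ" "Q2 \<in> QQ" "Q3 \<in> QQ" "Q1 \<noteq> Q2" "\<not> Q1 \<inter> Q2 \<subseteq> Q3" by blast
  from caseA[OF this] show ?thesis by (meson le_trans max.cobounded2)
next
  case False
  then have star: "\<forall>Q1\<in>QQ. \<forall>Q2\<in>QQ. \<forall>Q3\<in>QQ. Q1 \<noteq> Q2 \<longrightarrow> Q1 \<inter> Q2 \<subseteq> Q3" by blast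
  show ?thesis
  proof (cases "r - t \<le> card QQ")
    case True
    then have "2 \<le> card QQ" using tr by linarith
    from caseB[OF this True star] show ?thesis by (meson le_trans max.cobounded1)
  next
    case False
    then have cq: "card QQ \<le> r - t - 1" by linarith
    have "card F \<le> card QQ * n ^ (r - t - 1) + 2 ^ r * r * (r * n ^ (r - t - 2))" by (rule crude)
    also have "\<dots> \<le> (r - t - 1) * n ^ (r - t - 1) + (2 ^ r * r * r) * n ^ (r - t - 2)"
      using cq by (simp add: mult_right_mono)
    also have "\<dots> \<le> n ^ (r - t) - (n - 1) ^ (r - t)"
      using crude_arith[of "r - t" "2 ^ r * r * r" n] tr N by (simp add: diff_diff_add)
    also have "\<dots> \<le> n ^ (r - t) - (n - 1) ^ (r - t) + t * (n - 1)" by simp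
    finally show ?thesis by (meson le_trans max.cobounded1)
  qed
qed

end



lemma upd_grid: "c \<in> grid r (\<lambda>_. n) \<Longrightarrow> l < r \<Longrightarrow> v < n \<Longrightarrow> c(l := v) \<in> grid r (\<lambda>_. n)"
  by (auto simp: grid_def PiE_iff extensional_def)

lemma other_val: assumes "2 \<le> (n::nat)" shows "\<exists>v<n. v \<noteq> x"
proof (cases "x = 0")
  case True then show ?thesis using assms by (intro exI[of _ 1]) auto
next
  case False then show ?thesis using assms by (intro exI[of _ 0]) auto
qed

lemma no_common:
  assumes "\<forall>l<r. \<exists>A\<in>F. \<exists>B\<in>F. A l \<noteq> B l"
  shows "card (common_coords r F) = 0"
proof -
  have "common_coords r F = {}" using assms unfolding common_coords_def by fastforce
  then show ?thesis by simp
qed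

lemma card_agree_ge: "X \<subseteq> agree r A B \<Longrightarrow> card X \<le> card (agree r A B)"
  by (rule card_mono) (auto simp: agree_def)

lemma agree_sym: "agree r A B = agree r B A"
  unfolding agree_def by auto

lemma HM_nt:
  assumes T: "T \<subseteq> {..<r}" "card T = t" and tr: "t + 2 \<le> r" and t1: "1 \<le> t" and n2: "2 \<le> n"
    and c: "c \<in> grid r (\<lambda>_. n)"
  shows "nontrivial_t_intersecting r (\<lambda>_. n) t (HM r n c T)"
proof -
  have fT: "finite T" using T finite_subset by auto
  have cR: "card ({..<r} - T) = r - t" using T fT by (simp add: card_Diff_subset)
  let ?X1 = "\<lambda>A. (\<forall>l\<in>T. A l = c l) \<and> (\<exists>l\<in>{..<r}-T. A l = c l)"
  let ?Y = "\<lambda>A d. d \<in> T \<and> (\<forall>l\<in>{..<r}-{d}. A l = c l) \<and> A d \<noteq> c d"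
  have mix: "t \<le> card (agree r A B)" if A: "?X1 A" and B: "?Y B d" for A B d
  proof -
    obtain l where l: "l \<in> {..<r} - T" "A l = c l" using A by blast
    have "l \<noteq> d" using l B by auto
    then have "B l = c l" using B l by auto
    then have "insert l (T - {d}) \<subseteq> agree r A B" using A B l T unfolding agree_def by auto
    moreover have "card (insert l (T - {d})) = t" using l B fT T t1 by simp
    ultimately show ?thesis using card_agree_ge by metis
  qed
  have inter: "t_intersecting r t (HM r n c T)"
    unfolding t_intersecting_def
  proof (intro ballI)
    fix A B assume A: "A \<in> HM r n c T" and B: "B \<in> HM r n c T"
    show "t \<le> card (agree r A B)"
    proof (cases "?X1 A")
      case XA: True
      show ?thesis
      proof (cases "?X1 B")
        case True
        then have "T \<subseteq> agree r A B" using XA T unfolding agree_def by auto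
        then show ?thesis using card_agree_ge T by metis
      next
        case False
        then obtain d where "?Y B d" using B unfolding HM_def by auto
        then show ?thesis using mix XA by blast
      qed
    next
      case XA: False
      then obtain d where dA: "?Y A d" using A unfolding HM_def by auto
      show ?thesis
      proof (cases "?X1 B")
        case True
        then show ?thesis using mix[OF True dA] agree_sym by metis
      next
        case False
        then obtain d' where dB: "?Y B d'" using B unfolding HM_def by auto
        have "{..<r} - {d, d'} \<subseteq> agree r A B" using dA dB unfolding agree_def by auto
        moreover have "r - 2 \<le> card ({..<r} - {d, d'})"
        proof -
          have "card {..<r} - card {d, d'} \<le> card ({..<r} - {d, d'})" by (rule diff_card_le_card_Diff) auto
          moreover have "card {d, d'} \<le> 2" by (simp add: card_insert_le_m1)
          ultimately show ?thesis by simp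
        qed
        ultimately show ?thesis using card_agree_ge tr by (meson le_diff_conv2 le_trans add_leD1 add_le_imp_le_diff)
      qed
    qed
  qed
  have sub: "HM r n c T \<subseteq> grid r (\<lambda>_. n)" unfolding HM_def by auto
  have "\<forall>l<r. \<exists>A\<in>HM r n c T. \<exists>B\<in>HM r n c T. A l \<noteq> B l"
  proof (intro allI impI)
    fix l assume l: "l < r"
    obtain v where v: "v < n" "v \<noteq> c l" using other_val[OF n2] by blast
    have cg: "c(l := v) \<in> grid r (\<lambda>_. n)" using upd_grid[OF c l v(1)] .
    show "\<exists>A\<in>HM r n c T. \<exists>B\<in>HM r n c T. A l \<noteq> B l"
    proof (cases "l \<in> T")
      case True
      have "{..<r} - T \<noteq> {}"
      proof
        assume "{..<r} - T = {}"
        then have "card ({..<r} - T) = 0" by simp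
        then show False using cR tr by simp
      qed
      then obtain l' where "l' \<in> {..<r} - T" by blast
      then have "c \<in> HM r n c T" using c unfolding HM_def by auto
      moreover have "c(l := v) \<in> HM r n c T" using cg True v unfolding HM_def by auto
      moreover have "c l \<noteq> (c(l := v)) l" using v by simp
      ultimately show ?thesis by blast
    next
      case False
      have "card ({..<r} - T - {l}) \<ge> 1" using cR tr l False by (simp add: card_Diff_singleton_if finite_subset)
      then have "{..<r} - T - {l} \<noteq> {}" by (metis card.empty not_one_le_zero)
      then obtain l' where l': "l' \<in> {..<r} - T - {l}" by blast
      have "c \<in> HM r n c T" using c l' unfolding HM_def by auto
      moreover have "c(l := v) \<in> HM r n c T" using cg False l' unfolding HM_def by auto
      moreover have "c l \<noteq> (c(l := v)) l" using v by simp
      ultimately show ?thesis by blast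
    qed
  qed
  then have "card (common_coords r (HM r n c T)) = 0" by (rule no_common)
  then show ?thesis unfolding nontrivial_t_intersecting_def using sub inter t1 by simp
qed

lemma TR_nt:
  assumes D: "D \<subseteq> {..<r}" "card D = t + 2" and t1: "1 \<le> t" and n2: "2 \<le> n"
    and c: "c \<in> grid r (\<lambda>_. n)"
  shows "nontrivial_t_intersecting r (\<lambda>_. n) t (TR r n c D t)"
proof -
  have fD: "finite D" using D finite_subset by auto
  have inter: "t_intersecting r t (TR r n c D t)"
    unfolding t_intersecting_def
  proof (intro ballI)
    fix A B assume A: "A \<in> TR r n c D t" and B: "B \<in> TR r n c D t"
    define EA where "EA = {l\<in>D. A l = c l}"
    define EB where "EB = {l\<in>D. B l = c l}"
    have "t + 1 \<le> card EA" "t + 1 \<le> card EB" using A B unfolding TR_def EA_def EB_def by auto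
    moreover have "card (EA \<union> EB) \<le> t + 2" using D fD unfolding EA_def EB_def by (metis (no_types, lifting) card_mono Un_least mem_Collect_eq subsetI)
    moreover have "card EA + card EB = card (EA \<union> EB) + card (EA \<inter> EB)"
      using fD unfolding EA_def EB_def by (intro card_Un_Int) auto
    ultimately have "t \<le> card (EA \<inter> EB)" by linarith
    moreover have "EA \<inter> EB \<subseteq> agree r A B" using D unfolding EA_def EB_def agree_def by auto
    ultimately show "t \<le> card (agree r A B)" using card_agree_ge le_trans by blast
  qed
  have sub: "TR r n c D t \<subseteq> grid r (\<lambda>_. n)" unfolding TR_def by auto
  have cin: "c \<in> TR r n c D t" using c D unfolding TR_def by auto
  have "\<forall>l<r. \<exists>A\<in>TR r n c D t. \<exists>B\<in>TR r n c D t. A l \<noteq> B l"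
  proof (intro allI impI)
    fix l assume l: "l < r"
    obtain v where v: "v < n" "v \<noteq> c l" using other_val[OF n2] by blast
    have cg: "c(l := v) \<in> grid r (\<lambda>_. n)" using upd_grid[OF c l v(1)] .
    have "D - {l} \<subseteq> {l'\<in>D. (c(l := v)) l' = c l'}" by auto
    then have "card (D - {l}) \<le> card {l'\<in>D. (c(l := v)) l' = c l'}" using fD by (intro card_mono) auto
    moreover have "t + 1 \<le> card (D - {l})" using D fD by (simp add: card_Diff_singleton_if)
    ultimately have "c(l := v) \<in> TR r n c D t" using cg unfolding TR_def by auto
    moreover have "c l \<noteq> (c(l := v)) l" using v by simp
    ultimately show "\<exists>A\<in>TR r n c D t. \<exists>B\<in>TR r n c D t. A l \<noteq> B l" using cin by blast
  qed
  then have "card (common_coords r (TR r n c D t)) = 0" by (rule no_common)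
  then show ?thesis unfolding nontrivial_t_intersecting_def using sub inter t1 by simp
qed



theorem theorem1p5:
  fixes r t :: nat
  assumes "r \<ge> 3" and "1 \<le> t" and "t \<le> r - 2"
  shows "\<exists>N::nat. \<forall>n\<ge>N.
    int (iota0_uniform t n r) =
      max (int n ^ (r - t) - (int n - 1) ^ (r - t) + int t * (int n - 1))
          ((int t + 2) * int n ^ (r - t - 1) - (int t + 1) * int n ^ (r - t - 2))"
proof -
  have tr: "t + 2 \<le> r" using assms by linarith
  have t1: "1 \<le> t" using assms by simp
  define N where "N = 2 ^ r * r * r + (r - t)^2 + 2"
  show ?thesis
  proof (intro exI[of _ N] allI impI)
    fix n assume n: "N \<le> n"
    have n2: "2 \<le> n" and nb: "2 ^ r * r * r + (r - t)^2 \<le> n" using n unfolding N_def by auto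
    define f1 where "f1 = n ^ (r - t) - (n - 1) ^ (r - t) + t * (n - 1)"
    define f2 where "f2 = n ^ (r - (t + 2)) + (t + 2) * ((n - 1) * n ^ (r - (t + 2)))"
    define c0 where "c0 = restrict (\<lambda>_. 0::nat) {..<r}"
    have c0: "c0 \<in> grid r (\<lambda>_. n)" using n2 unfolding c0_def grid_def by auto
    let ?S = "{F. nontrivial_t_intersecting r (\<lambda>_. n) t F}"
    have fin: "finite ?S"
    proof -
      have "?S \<subseteq> Pow (grid r (\<lambda>_. n))" unfolding nontrivial_t_intersecting_def by auto
      then show ?thesis using finite_grid by (meson finite_Pow_iff finite_subset)
    qed
    have ub: "card F \<le> max f1 f2" if F: "F \<in> ?S" for F
    proof -
      have nt: "nontrivial_t_intersecting r (\<lambda>_. n) t F" using F by simp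
      interpret fam2 r n t F
        by unfold_locales (use nt tr t1 n2 in \<open>auto simp: nontrivial_t_intersecting_def\<close>)
      show ?thesis using upper[OF nb] unfolding f1_def f2_def .
    qed
    have h1: "HM r n c0 {..<t} \<in> ?S" using HM_nt[OF _ _ tr t1 n2 c0] tr by simp
    have ch1: "card (HM r n c0 {..<t}) = f1" using card_HM[OF c0] tr unfolding f1_def by simp
    have h2: "TR r n c0 {..<t+2} t \<in> ?S" using TR_nt[OF _ _ t1 n2 c0] tr by simp
    have ch2: "card (TR r n c0 {..<t+2} t) = f2" using card_TR[OF c0] tr unfolding f2_def by simp
    have mem: "max f1 f2 \<in> card ` ?S"
    proof (cases "f1 \<le> f2")
      case True then show ?thesis using h2 ch2 by (metis image_eqI max_absorb2)
    next
      case False then show ?thesis using h1 ch1 by (metis image_eqI max_def)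
    qed
    have io: "iota0_uniform t n r = max f1 f2"
      unfolding iota0_uniform_def iota0_def
      by (rule Max_eqI) (use fin mem ub in auto)
    have n1: "1 \<le> n" using n2 by simp
    have i1: "int f1 = int n ^ (r - t) - (int n - 1) ^ (r - t) + int t * (int n - 1)"
    proof -
      have le: "(n - 1) ^ (r - t) \<le> n ^ (r - t)" by (simp add: power_mono)
      have "int f1 = int (n ^ (r - t)) - int ((n - 1) ^ (r - t)) + int t * int (n - 1)"
        unfolding f1_def using le by (simp add: of_nat_diff)
      then show ?thesis using n1 by (simp add: of_nat_diff)
    qed
    have i2: "int f2 = (int t + 2) * int n ^ (r - t - 1) - (int t + 1) * int n ^ (r - t - 2)"
    proof -
      define k where "k = r - t - 2"
      have k: "r - t - 1 = Suc k" "r - t - 2 = k" "r - (t + 2) = k" using tr unfolding k_def by presburger+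
      have "int f2 = int n ^ k + (int t + 2) * ((int n - 1) * int n ^ k)"
        unfolding f2_def k(3) using n1 by (simp add: of_nat_diff distrib_right)
      also have "\<dots> = (int t + 2) * int n ^ Suc k - (int t + 1) * int n ^ k"
        by (simp add: algebra_simps)
      finally show ?thesis by (simp only: k(1) k(2))
    qed
    show "int (iota0_uniform t n r) =
      max (int n ^ (r - t) - (int n - 1) ^ (r - t) + int t * (int n - 1))
          ((int t + 2) * int n ^ (r - t - 1) - (int t + 1) * int n ^ (r - t - 2))"
      unfolding io using i1 i2 by (simp add: of_nat_max)
  qed
qed


end
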